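(* Let $m,n$ be nonzero integers with $|m|<|n|$. Let $u_1,u_2,u_3$ be vertices of type $a$ of $\Lambda_{m,n}$ with $u_1<u_2<u_3$. For $i,j\in\{1,2,3\}$ let $\Lambda_{ij}=\mathrm{lk}_\Lambda(u_i)\cap\mathrm{lk}_\Lambda(u_j)$, and assume $\Lambda_{13}\neq\emptyset$. Then $\Lambda_{13}\subsetneq\Lambda_{12}$ and $\Lambda_{13}\subseteq \Lambda_{23}$. Moreover, if $m$ does not divide $n$ then $\Lambda_{13}\subsetneq \Lambda_{23}$, and if $m$ divides $n$ then $\Lambda_{13}=\Lambda_{23}$.
   Context: $\mathrm{BS}(m,n)=\langle a,t\mid ta^mt^{-1}=a^n\rangle$; $\Upsilon_{m,n}$ is its Cayley graph for $\{a,t\}$ (edges $g\to gs$ oriented, labeled $s$); $a$-lines and $t$-lines are the subgraphs spanned by left cosets of $\langle a\rangle$ and $\langle t\rangle$. $\Lambda_{m,n}$ has one vertex per $a$-line or $t$-line (of type $a$ or $t$), adjacent when the lines intersect; $\mathrm{lk}_\Lambda(u)$ is the set of neighbours of $u$. $T$ is the Bass–Serre tree whose vertices are the $a$-lines (= type-$a$ vertices), with one edge oriented from $\ell$ to $\ell'$ for each pair of $a$-lines such that $gt\in\ell'$ for some $g\in\ell$. Partial order: $v_1\le v_2$ if every edge of the geodesic from $v_1$ to $v_2$ in $T$ is oriented toward $v_2$; $<$ denotes strict order. *)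

theory Defs
  imports Main
begin

datatype gen = GA | GT

(* a letter is a generator together with an inversion flag (True = inverse) *)
type_synonym letter = "gen \<times> bool"
type_synonym word = "letter list"

definition letter_inv :: "letter \<Rightarrow> letter" where
  "letter_inv x = (fst x, \<not> snd x)"

definition gpow :: "gen \<Rightarrow> int \<Rightarrow> word" where
  "gpow s k = (if 0 \<le> k then replicate (nat k) (s, False) else replicate (nat (- k)) (s, True))"

definition bs_relator :: "int \<Rightarrow> int \<Rightarrow> word" where
  "bs_relator m n = [(GT, False)] @ gpow GA m @ [(GT, True)] @ gpow GA (- n)"

(* equality in BS(m,n) = <a,t | t a^m t^-1 = a^n>: the equivalence relation on words
   generated by inserting/deleting trivial pairs x x^-1 and the relator *)
inductive bs_eq :: "int \<Rightarrow> int \<Rightarrow> word \<Rightarrow> word \<Rightarrow> bool" for m n where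
  bs_refl: "bs_eq m n w w"
| bs_sym: "bs_eq m n u v \<Longrightarrow> bs_eq m n v u"
| bs_trans: "bs_eq m n u v \<Longrightarrow> bs_eq m n v w \<Longrightarrow> bs_eq m n u w"
| bs_cancel: "bs_eq m n (u @ [x, letter_inv x] @ v) (u @ v)"
| bs_rel: "bs_eq m n (u @ bs_relator m n @ v) (u @ v)"

definition bs_elem :: "int \<Rightarrow> int \<Rightarrow> word \<Rightarrow> word set" where
  "bs_elem m n w = {v. bs_eq m n w v}"

definition line :: "int \<Rightarrow> int \<Rightarrow> gen \<Rightarrow> word \<Rightarrow> word set set" where
  "line m n s g = {bs_elem m n (g @ gpow s k) | k. True}"

definition alines :: "int \<Rightarrow> int \<Rightarrow> word set set set" where
  "alines m n = {line m n GA g | g. True}"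

definition tlines :: "int \<Rightarrow> int \<Rightarrow> word set set set" where
  "tlines m n = {line m n GT g | g. True}"

datatype lvert = VA "word set set" | VT "word set set"

fun lset :: "lvert \<Rightarrow> word set set" where
  "lset (VA L) = L"
| "lset (VT L) = L"

definition Lverts :: "int \<Rightarrow> int \<Rightarrow> lvert set" where
  "Lverts m n = VA ` alines m n \<union> VT ` tlines m n"

definition Ladj :: "int \<Rightarrow> int \<Rightarrow> lvert \<Rightarrow> lvert \<Rightarrow> bool" where
  "Ladj m n x y \<longleftrightarrow> x \<in> Lverts m n \<and> y \<in> Lverts m n \<and> x \<noteq> y \<and> lset x \<inter> lset y \<noteq> {}"

definition Llink :: "int \<Rightarrow> int \<Rightarrow> lvert \<Rightarrow> lvert set" where
  "Llink m n u = {v. Ladj m n u v}"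

definition Tedge :: "int \<Rightarrow> int \<Rightarrow> word set set \<Rightarrow> word set set \<Rightarrow> bool" where
  "Tedge m n l l' \<longleftrightarrow> l \<in> alines m n \<and> l' \<in> alines m n \<and>
     (\<exists>g. bs_elem m n g \<in> l \<and> bs_elem m n (g @ [(GT, False)]) \<in> l')"

definition Tadj :: "int \<Rightarrow> int \<Rightarrow> word set set \<Rightarrow> word set set \<Rightarrow> bool" where
  "Tadj m n x y \<longleftrightarrow> Tedge m n x y \<or> Tedge m n y x"

definition Tpath :: "int \<Rightarrow> int \<Rightarrow> word set set list \<Rightarrow> word set set \<Rightarrow> word set set \<Rightarrow> bool" where
  "Tpath m n p x y \<longleftrightarrow> p \<noteq> [] \<and> hd p = x \<and> last p = y \<and> set p \<subseteq> alines m n \<and>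
     (\<forall>i. Suc i < length p \<longrightarrow> Tadj m n (p ! i) (p ! Suc i))"

definition Tgeodesic :: "int \<Rightarrow> int \<Rightarrow> word set set list \<Rightarrow> word set set \<Rightarrow> word set set \<Rightarrow> bool" where
  "Tgeodesic m n p x y \<longleftrightarrow> Tpath m n p x y \<and> (\<forall>q. Tpath m n q x y \<longrightarrow> length p \<le> length q)"

definition Tle :: "int \<Rightarrow> int \<Rightarrow> word set set \<Rightarrow> word set set \<Rightarrow> bool" where
  "Tle m n v1 v2 \<longleftrightarrow> v1 \<in> alines m n \<and> v2 \<in> alines m n \<and> (\<exists>p. Tgeodesic m n p v1 v2) \<and>
     (\<forall>p. Tgeodesic m n p v1 v2 \<longrightarrow> (\<forall>i. Suc i < length p \<longrightarrow> Tedge m n (p ! i) (p ! Suc i)))"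

definition Tless :: "int \<Rightarrow> int \<Rightarrow> word set set \<Rightarrow> word set set \<Rightarrow> bool" where
  "Tless m n v1 v2 \<longleftrightarrow> Tle m n v1 v2 \<and> v1 \<noteq> v2"

end

theory Submission
  imports Defs
begin

locale BS =
  fixes m n :: int
  assumes m0: "m \<noteq> 0" and n0: "n \<noteq> 0"
begin

definition MM :: "bool \<Rightarrow> int" where "MM s = (if s then \<bar>n\<bar> else \<bar>m\<bar>)"
definition CR :: "bool \<Rightarrow> int" where "CR s = (if s then sgn n * m else sgn m * n)"

lemma MM_pos: "MM s > 0" using m0 n0 by (simp add: MM_def)

fun mulA :: "int \<Rightarrow> (int \<times> bool) list \<Rightarrow> (int \<times> bool) list" where
  "mulA k [] = []"
| "mulA k ((e,s)#r) = ((e+k) mod MM s, s) # mulA ((e+k) div MM s * CR s) r"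

fun valid :: "(int \<times> bool) list \<Rightarrow> bool" where
  "valid [] = True"
| "valid ((e,s)#r) = (0 \<le> e \<and> e < MM s \<and> valid r \<and>
     (case r of [] \<Rightarrow> True | (e',s')#_ \<Rightarrow> \<not>(s' \<noteq> s \<and> e' = 0)))"

definition tS :: "bool \<Rightarrow> (int \<times> bool) list \<Rightarrow> (int \<times> bool) list" where
  "tS s v = (if v \<noteq> [] \<and> hd v = (0, \<not>s) then tl v else (0,s)#v)"

fun act1 :: "letter \<Rightarrow> (int \<times> bool) list \<Rightarrow> (int \<times> bool) list" where
  "act1 (GA, b) = mulA (if b then -1 else 1)"
| "act1 (GT, b) = tS (\<not> b)"

definition act :: "word \<Rightarrow> (int \<times> bool) list \<Rightarrow> (int \<times> bool) list" where
  "act w v = foldr act1 w v"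

lemma divmod_aux: "M > 0 \<Longrightarrow> ((a::int) mod M + k) div M + a div M = (a + k) div M"
proof -
  assume "M > 0"
  have "a + k = (a mod M + k) + (a div M) * M" by simp
  hence "(a + k) div M = ((a mod M + k) + (a div M) * M) div M" by simp
  also have "\<dots> = a div M + (a mod M + k) div M" using \<open>M>0\<close> by (intro div_mult_self1) simp
  finally show ?thesis by simp
qed

lemma mulA_add: "mulA k (mulA l v) = mulA (k+l) v"
proof (induction v arbitrary: k l)
  case Nil thus ?case by simp
next
  case (Cons x r)
  obtain e s where x: "x = (e,s)" by fastforce
  have p: "MM s > 0" by (rule MM_pos)
  have 1: "((e + l) mod MM s + k) mod MM s = (e + (k+l)) mod MM s"
    by (metis add.assoc add.commute mod_add_left_eq)
  have 2: "((e + l) mod MM s + k) div MM s * CR s + (e + l) div MM s * CR s = (e + (k+l)) div MM s * CR s"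
    using divmod_aux[OF p, of "e+l" k] by (metis add.assoc add.commute distrib_right)
  show ?case using Cons.IH 1 2 x by simp
qed

lemma mulA0: "valid v \<Longrightarrow> mulA 0 v = v"
  by (induction v rule: valid.induct) auto

lemma CR_mod: "s' \<noteq> s \<Longrightarrow> (c * CR s) mod MM s' = 0"
  by (cases s; cases s') (auto simp: CR_def MM_def)

lemma mulA_valid: "valid v \<Longrightarrow> valid (mulA k v)"
proof (induction v arbitrary: k rule: valid.induct)
  case 1 thus ?case by simp
next
  case (2 e s r)
  have p: "MM s > 0" by (rule MM_pos)
  show ?case
  proof (cases r)
    case Nil thus ?thesis using 2 p by simp
  next
    case (Cons y r')
    obtain e' s' where y: "y = (e',s')" by fastforce
    have v: "valid r" "0 \<le> e'" "e' < MM s'" "\<not>(s' \<noteq> s \<and> e' = 0)" using 2(2) Cons y by auto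
    let ?c = "(e+k) div MM s * CR s"
    have h: "s' \<noteq> s \<Longrightarrow> (e' + ?c) mod MM s' = e'"
      using CR_mod[of s' s "(e+k) div MM s"] v by (simp add: mod_add_right_eq[symmetric] mod_pos_pos_trivial) 
    have vr: "valid (mulA ?c r)" using 2(1) v by simp
    obtain rest where mr: "mulA ?c r = ((e'+?c) mod MM s', s') # rest" using Cons y by simp
    have pin: "\<not>(s' \<noteq> s \<and> (e'+?c) mod MM s' = 0)" by (metis h v(4))
    have "valid (mulA k ((e,s)#r)) = (0 \<le> (e+k) mod MM s \<and> (e+k) mod MM s < MM s \<and> valid (mulA ?c r) \<and>
       (case mulA ?c r of [] \<Rightarrow> True | (e',s'')#_ \<Rightarrow> \<not>(s'' \<noteq> s \<and> e' = 0)))" by simp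
    thus ?thesis using p vr mr pin by simp
  qed
qed

lemma tS_valid: "valid v \<Longrightarrow> valid (tS s v)"
proof (cases v)
  case Nil
  assume "valid v" thus ?thesis using Nil MM_pos[of s] by (simp add: tS_def)
next
  case (Cons y r)
  assume vv: "valid v"
  obtain e' s' where y: "y = (e',s')" by fastforce
  show ?thesis
  proof (cases "y = (0, \<not>s)")
    case True thus ?thesis using vv Cons by (auto simp: tS_def)
  next
    case False
    hence "\<not>(s' \<noteq> s \<and> e' = 0)" using y by auto
    thus ?thesis using vv Cons y MM_pos[of s] False by (simp add: tS_def)
  qed
qed

lemma tS_inv: "valid v \<Longrightarrow> tS s (tS (\<not>s) v) = v"
proof (cases v)
  case Nil thus ?thesis by (simp add: tS_def)
next
  case (Cons y r)
  assume vv: "valid v"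
  obtain e' s' where y: "y = (e',s')" by fastforce
  show ?thesis
  proof (cases "y = (0, s)")
    case True
    have "r = [] \<or> (\<exists>e'' s'' r'. r = (e'',s'')#r' \<and> \<not>(s'' \<noteq> s \<and> e'' = 0))"
      using vv Cons True by (cases r) auto
    thus ?thesis using True Cons by (auto simp: tS_def)
  next
    case False
    thus ?thesis using Cons by (simp add: tS_def)
  qed
qed

lemma tS_inv': "valid v \<Longrightarrow> tS (\<not>s) (tS s v) = v"
  using tS_inv[of v "\<not>s"] by simp

lemma act1_valid: "valid v \<Longrightarrow> valid (act1 x v)"
  by (cases x rule: act1.cases) (auto simp: mulA_valid tS_valid)

lemma act_valid: "valid v \<Longrightarrow> valid (act w v)"
  by (induction w) (auto simp: act_def act1_valid)

lemma act_append: "act (u @ w) v = act u (act w v)"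
  by (simp add: act_def)

lemma act_Nil[simp]: "act [] v = v" by (simp add: act_def)
lemma act_Cons: "act (x # w) v = act1 x (act w v)" by (simp add: act_def)

lemma act_repA: "valid v \<Longrightarrow> act (replicate j (GA,False)) v = mulA (int j) v"
  by (induction j) (auto simp: mulA0 act_Cons mulA_add add.commute)

lemma act_repAi: "valid v \<Longrightarrow> act (replicate j (GA,True)) v = mulA (- int j) v"
  by (induction j) (auto simp: mulA0 act_Cons mulA_add add.commute)

lemma act_gpowA: "valid v \<Longrightarrow> act (gpow GA k) v = mulA k v"
  by (auto simp: gpow_def act_repA act_repAi)

lemma act_repT: "valid v \<Longrightarrow> act (replicate j (GT,b)) v = (tS (\<not>b) ^^ j) v"
  by (induction j) (auto simp: act_Cons)

lemma sgn_aux: "x \<noteq> 0 \<Longrightarrow> (x::int) div \<bar>x\<bar> * sgn x = 1"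
proof -
  assume x: "x \<noteq> 0"
  have "x div \<bar>x\<bar> = (sgn x * \<bar>x\<bar>) div \<bar>x\<bar>" by (simp add: sgn_mult_abs)
  also have "\<dots> = sgn x" using x by simp
  finally show ?thesis using x by (simp add: sgn_if)
qed

lemma relator_act: "valid v \<Longrightarrow> act (bs_relator m n) v = v"
proof -
  assume vv: "valid v"
  let ?w = "mulA (-n) v"
  have vw: "valid ?w" using vv by (rule mulA_valid)
  have key: "tS True (mulA m (tS False ?w)) = mulA n ?w"
  proof (cases "?w \<noteq> [] \<and> hd ?w = (0,True)")
    case True
    then obtain r where r: "?w = (0,True)#r" by (cases ?w) auto
    have vr: "valid r" and pr: "case r of [] \<Rightarrow> True | (e',s')#_ \<Rightarrow> \<not>(s' \<noteq> True \<and> e' = 0)"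
      using vw r by (auto simp del: mulA.simps)
    have 1: "tS False ?w = r" using r by (simp add: tS_def)
    have 2: "\<not>(mulA m r \<noteq> [] \<and> hd (mulA m r) = (0,False))"
    proof (cases r)
      case Nil thus ?thesis by simp
    next
      case (Cons y r')
      obtain e' s' where y: "y = (e',s')" by fastforce
      show ?thesis
      proof (cases s')
        case True thus ?thesis using Cons y by simp
      next
        case False
        have "e' \<noteq> 0" "0 \<le> e'" "e' < \<bar>m\<bar>" using pr vr Cons y False by (auto simp: MM_def)
        have "m mod \<bar>m\<bar> = 0" by simp
        hence "(e'+m) mod \<bar>m\<bar> = (e' + 0) mod \<bar>m\<bar>" by (metis mod_add_right_eq)
        hence "(e'+m) mod \<bar>m\<bar> \<noteq> 0" using \<open>e' \<noteq> 0\<close> \<open>0 \<le> e'\<close> \<open>e' < \<bar>m\<bar>\<close> by (simp add: mod_pos_pos_trivial)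
        thus ?thesis using Cons y False by (simp add: MM_def)
      qed
    qed
    have 3: "mulA n ?w = (0,True) # mulA m r" using r n0 sgn_aux[OF n0] by (simp add: MM_def CR_def mult.assoc[symmetric])
    have 4: "tS True (mulA m r) = (0,True) # mulA m r" using 2 by (auto simp: tS_def)
    show ?thesis using 1 3 4 by simp
  next
    case False
    have 1: "tS False ?w = (0,False)#?w" using False by (auto simp: tS_def)
    have 2: "mulA m ((0,False)#?w) = (0,False) # mulA n ?w" using m0 sgn_aux[OF m0] by (simp add: MM_def CR_def mult.assoc[symmetric])
    show ?thesis using 1 2 by (simp add: tS_def)
  qed
  have "act (bs_relator m n) v = tS True (mulA m (tS False ?w))"
    using vv by (simp add: bs_relator_def act_append act_gpowA act_Cons mulA_valid tS_valid)
  also have "\<dots> = v" using key mulA_add[of n "-n" v] mulA0[OF vv] by simp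
  finally show ?thesis .
qed

lemma cancel_act: "valid v \<Longrightarrow> act [x, letter_inv x] v = v"
  by (cases x rule: act1.cases) (auto simp: act_Cons letter_inv_def mulA_add mulA0 tS_inv tS_inv')

lemma bs_eq_act: "bs_eq m n u w \<Longrightarrow> valid v \<Longrightarrow> act u v = act w v"
proof (induction arbitrary: v rule: bs_eq.induct)
  case (bs_cancel u x v')
  thus ?case using cancel_act[OF act_valid[OF bs_cancel.prems], of x v'] by (simp add: act_append act_Cons)
next
  case (bs_rel u v')
  thus ?case using relator_act[OF act_valid[OF bs_rel.prems], of v'] by (simp add: act_append)
qed auto

end


lemma bs_cong: "bs_eq m n u v \<Longrightarrow> bs_eq m n (p @ u @ q) (p @ v @ q)"
proof (induction rule: bs_eq.induct)
  case (bs_refl w) thus ?case by (rule bs_eq.bs_refl)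
next
  case (bs_sym u v) from bs_sym.IH show ?case by (rule bs_eq.bs_sym)
next
  case (bs_trans u v w) thus ?case by (metis bs_eq.bs_trans)
next
  case (bs_cancel u x v)
  show ?case using bs_eq.bs_cancel[of m n "p @ u" x "v @ q"] by simp
next
  case (bs_rel u v)
  show ?case using bs_eq.bs_rel[of m n "p @ u" "v @ q"] by simp
qed

lemma bs_tr[trans]: "bs_eq m n a b \<Longrightarrow> bs_eq m n b c \<Longrightarrow> bs_eq m n a c"
  by (rule bs_eq.bs_trans)

lemma bs_app: "bs_eq m n u u' \<Longrightarrow> bs_eq m n v v' \<Longrightarrow> bs_eq m n (u @ v) (u' @ v')"
proof -
  assume a: "bs_eq m n u u'" "bs_eq m n v v'"
  have "bs_eq m n (u @ v) (u' @ v)" using bs_cong[OF a(1), of "[]" v] by simp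
  also have "bs_eq m n (u' @ v) (u' @ v')" using bs_cong[OF a(2), of u' "[]"] by simp
  finally show ?thesis .
qed

lemma bs_r: "bs_eq m n v v' \<Longrightarrow> bs_eq m n (u @ v) (u @ v')"
  by (rule bs_app[OF bs_eq.bs_refl])
lemma bs_l: "bs_eq m n u u' \<Longrightarrow> bs_eq m n (u @ v) (u' @ v)"
  by (rule bs_app[OF _ bs_eq.bs_refl])

lemma linv_linv[simp]: "letter_inv (letter_inv x) = x" by (simp add: letter_inv_def)

lemma bs_canc2: "bs_eq m n (p @ [letter_inv x, x] @ q) (p @ q)"
  using bs_eq.bs_cancel[of m n p "letter_inv x" q] by simp

lemma rep_cancel: "bs_eq m n (replicate a x @ replicate b (letter_inv x))
   (if b \<le> a then replicate (a-b) x else replicate (b-a) (letter_inv x))"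
proof (induction a arbitrary: b)
  case 0 thus ?case by (auto intro: bs_eq.bs_refl)
next
  case (Suc a)
  show ?case
  proof (cases b)
    case 0 thus ?thesis by (auto intro: bs_eq.bs_refl)
  next
    case (Suc b')
    have "replicate (Suc a) x @ replicate b (letter_inv x) = replicate a x @ [x, letter_inv x] @ replicate b' (letter_inv x)"
      using Suc by (simp add: replicate_append_same[symmetric])
    hence "bs_eq m n (replicate (Suc a) x @ replicate b (letter_inv x)) (replicate a x @ replicate b' (letter_inv x))"
      by (simp only: bs_eq.bs_cancel)
    also have "bs_eq m n \<dots> (if b' \<le> a then replicate (a-b') x else replicate (b'-a) (letter_inv x))" by (rule Suc.IH)
    finally have X: "bs_eq m n (replicate (Suc a) x @ replicate b (letter_inv x)) (if b' \<le> a then replicate (a-b') x else replicate (b'-a) (letter_inv x))" .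
    have eq: "(if b' \<le> a then replicate (a-b') x else replicate (b'-a) (letter_inv x)) = (if b \<le> Suc a then replicate (Suc a-b) x else replicate (b-Suc a) (letter_inv x))"
      using Suc by simp
    from X show ?thesis unfolding eq .
  qed
qed

lemma letter_inv_F[simp]: "letter_inv (s,False) = (s,True)" "letter_inv (s,True) = (s,False)"
  by (simp_all add: letter_inv_def)

lemma gpow_add: "bs_eq m n (gpow s i @ gpow s j) (gpow s (i+j))"
proof -
  consider "0 \<le> i" "0 \<le> j" | "0 \<le> i" "j < 0" | "i < 0" "0 \<le> j" | "i < 0" "j < 0" by linarith
  thus ?thesis
  proof cases
    case 1 thus ?thesis by (simp add: gpow_def replicate_add[symmetric] nat_add_distrib bs_eq.bs_refl)
  next
    case 2
    have "bs_eq m n (replicate (nat i) (s,False) @ replicate (nat (-j)) (letter_inv (s,False)))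
      (if nat (-j) \<le> nat i then replicate (nat i - nat (-j)) (s,False) else replicate (nat (-j) - nat i) (letter_inv (s,False)))"
      by (rule rep_cancel)
    moreover have "(if nat (-j) \<le> nat i then replicate (nat i - nat (-j)) (s,False) else replicate (nat (-j) - nat i) (letter_inv (s,False))) = gpow s (i+j)"
      using 2 by (auto simp: gpow_def nat_diff_distrib)
    ultimately show ?thesis using 2 by (simp add: gpow_def)
  next
    case 3
    have "bs_eq m n (replicate (nat (-i)) (s,True) @ replicate (nat j) (letter_inv (s,True)))
      (if nat j \<le> nat (-i) then replicate (nat (-i) - nat j) (s,True) else replicate (nat j - nat (-i)) (letter_inv (s,True)))"
      by (rule rep_cancel)
    moreover have "(if nat j \<le> nat (-i) then replicate (nat (-i) - nat j) (s,True) else replicate (nat j - nat (-i)) (letter_inv (s,True))) = gpow s (i+j)"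
      using 3 by (auto simp: gpow_def nat_diff_distrib)
    ultimately show ?thesis using 3 by (simp add: gpow_def)
  next
    case 4
    have "nat (-(i+j)) = nat (-i) + nat (-j)" using 4 by simp
    thus ?thesis using 4 by (simp add: gpow_def replicate_add[symmetric] bs_eq.bs_refl)
  qed
qed

lemma gpow0[simp]: "gpow s 0 = []" by (simp add: gpow_def)

abbreviation "Tw \<equiv> [(GT,False)]"
abbreviation "Ti \<equiv> [(GT,True)]"

lemma rel1: "bs_eq m n (gpow GA n @ Tw) (Tw @ gpow GA m)"
proof -
  have "bs_eq m n (bs_relator m n @ gpow GA n @ Tw) (gpow GA n @ Tw)"
    using bs_eq.bs_rel[of m n "[]" "gpow GA n @ Tw"] by simp
  hence a: "bs_eq m n (gpow GA n @ Tw) (Tw @ gpow GA m @ Ti @ (gpow GA (-n) @ gpow GA n) @ Tw)"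
    by (simp add: bs_relator_def bs_eq.bs_sym)
  have "bs_eq m n (Tw @ gpow GA m @ Ti @ (gpow GA (-n) @ gpow GA n) @ Tw) (Tw @ gpow GA m @ Ti @ gpow GA 0 @ Tw)"
    using gpow_add[of m n GA "-n" n] by (intro bs_r bs_l) simp
  also have "Tw @ gpow GA m @ Ti @ gpow GA 0 @ Tw = (Tw @ gpow GA m) @ [(GT,True), (GT,False)] @ []" by simp
  also have "bs_eq m n \<dots> (Tw @ gpow GA m)" using bs_canc2[of m n "Tw @ gpow GA m" "(GT,False)" "[]"] by simp
  finally show ?thesis using a bs_tr by blast
qed

lemma relN: "bs_eq m n (gpow GA (int j*n) @ Tw) (Tw @ gpow GA (int j*m))"
proof (induction j)
  case 0 thus ?case by (simp add: bs_eq.bs_refl)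
next
  case (Suc j)
  have "bs_eq m n (gpow GA (int (Suc j)*n) @ Tw) ((gpow GA (int j*n) @ gpow GA n) @ Tw)"
    using bs_eq.bs_sym[OF gpow_add[of m n GA "int j*n" n]] by (intro bs_l) (simp add: distrib_right add.commute)
  also have "(gpow GA (int j*n) @ gpow GA n) @ Tw = gpow GA (int j*n) @ (gpow GA n @ Tw)" by simp
  also have "bs_eq m n \<dots> (gpow GA (int j*n) @ (Tw @ gpow GA m))" by (intro bs_r rel1)
  also have "gpow GA (int j*n) @ (Tw @ gpow GA m) = (gpow GA (int j*n) @ Tw) @ gpow GA m" by simp
  also have "bs_eq m n \<dots> ((Tw @ gpow GA (int j*m)) @ gpow GA m)" by (intro bs_l Suc.IH)
  also have "(Tw @ gpow GA (int j*m)) @ gpow GA m = Tw @ (gpow GA (int j*m) @ gpow GA m)" by simp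
  also have "bs_eq m n \<dots> (Tw @ gpow GA (int (Suc j)*m))"
    using gpow_add[of m n GA "int j*m" m] by (intro bs_r) (simp add: distrib_right add.commute)
  finally show ?case .
qed

lemma relZ: "bs_eq m n (gpow GA (j*n) @ Tw) (Tw @ gpow GA (j*m))"
proof (cases "j \<ge> 0")
  case True thus ?thesis using relN[of m n "nat j"] by simp
next
  case False
  define k where "k = nat (-j)"
  have j: "j = - int k" using False k_def by simp
  have "bs_eq m n (gpow GA (j*n) @ Tw) (gpow GA (j*n) @ Tw @ gpow GA (int k*m) @ gpow GA (j*m))"
  proof -
    have "bs_eq m n (gpow GA (int k*m) @ gpow GA (j*m)) (gpow GA 0)" using gpow_add[of m n GA "int k*m" "j*m"] j by simp
    hence "bs_eq m n ((gpow GA (j*n) @ Tw) @ (gpow GA (int k*m) @ gpow GA (j*m))) ((gpow GA (j*n) @ Tw) @ [])"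
      by (intro bs_r) simp
    thus ?thesis by (simp add: bs_eq.bs_sym)
  qed
  also have "gpow GA (j*n) @ Tw @ gpow GA (int k*m) @ gpow GA (j*m) = gpow GA (j*n) @ (Tw @ gpow GA (int k*m)) @ gpow GA (j*m)" by simp
  also have "bs_eq m n \<dots> (gpow GA (j*n) @ (gpow GA (int k*n) @ Tw) @ gpow GA (j*m))"
    by (intro bs_r bs_l bs_eq.bs_sym[OF relN])
  also have "gpow GA (j*n) @ (gpow GA (int k*n) @ Tw) @ gpow GA (j*m) = (gpow GA (j*n) @ gpow GA (int k*n)) @ Tw @ gpow GA (j*m)" by simp
  also have "bs_eq m n \<dots> (gpow GA 0 @ Tw @ gpow GA (j*m))"
    using gpow_add[of m n GA "j*n" "int k*n"] j by (intro bs_l) simp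
  finally show ?thesis by simp
qed

lemma relZi: "bs_eq m n (Ti @ gpow GA (j*n)) (gpow GA (j*m) @ Ti)"
proof -
  have "bs_eq m n (Ti @ gpow GA (j*n)) (Ti @ gpow GA (j*n) @ Tw @ Ti)"
    using bs_canc2[of m n "Ti @ gpow GA (j*n)" "(GT,True)" "[]"] by (simp add: bs_eq.bs_sym)
  also have "Ti @ gpow GA (j*n) @ Tw @ Ti = Ti @ (gpow GA (j*n) @ Tw) @ Ti" by simp
  also have "bs_eq m n \<dots> (Ti @ (Tw @ gpow GA (j*m)) @ Ti)" by (intro bs_r bs_l relZ)
  also have "Ti @ (Tw @ gpow GA (j*m)) @ Ti = [] @ [(GT,True),(GT,False)] @ (gpow GA (j*m) @ Ti)" by simp
  also have "bs_eq m n \<dots> (gpow GA (j*m) @ Ti)" using bs_canc2[of m n "[]" "(GT,False)"] by simp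
  finally show ?thesis .
qed


context BS begin

fun word_of :: "(int \<times> bool) list \<Rightarrow> word" where
  "word_of [] = []"
| "word_of ((e,s)#r) = gpow GA e @ [(GT, \<not>s)] @ word_of r"

definition cc :: "word \<Rightarrow> (int \<times> bool) list" where "cc g = act g []"

lemma cc_valid: "valid (cc g)" by (simp add: cc_def act_valid)

lemma valid_append1: "valid (v @ u) \<Longrightarrow> valid v"
proof (induction v rule: valid.induct)
  case 1 thus ?case by simp
next
  case (2 e s r) thus ?case by (cases r) auto
qed

lemma wo_act: "valid (v @ u) \<Longrightarrow> act (word_of v) u = v @ u"
proof (induction v)
  case Nil thus ?case by simp
next
  case (Cons x r)
  obtain e s where x: "x = (e,s)" by fastforce
  have vc: "valid ((e,s) # (r @ u))" using Cons.prems x by simp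
  have vr: "valid (r @ u)" and e: "0 \<le> e" "e < MM s"
    and pin: "case r @ u of [] \<Rightarrow> True | (e',s')#_ \<Rightarrow> \<not>(s' \<noteq> s \<and> e' = 0)" using vc by auto
  have IH: "act (word_of r) u = r @ u" using Cons.IH vr by simp
  have t: "tS s (r @ u) = (0,s) # (r @ u)"
    using pin by (cases "r @ u") (auto simp: tS_def)
  have v0: "valid ((0,s) # (r @ u))" using vr pin MM_pos[of s] by simp
  have "act (word_of ((e,s)#r)) u = act (gpow GA e) (tS s (r @ u))"
    by (simp add: act_append act_Cons IH)
  also have "\<dots> = mulA e ((0,s) # (r @ u))" using t v0 by (simp add: act_gpowA)
  also have "\<dots> = (e,s) # (r @ u)" using e mulA0[OF vr] by (simp add: mod_pos_pos_trivial div_pos_pos_trivial)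
  finally show ?case using x by simp
qed

lemma cc_wo: "valid v \<Longrightarrow> cc (word_of v) = v"
  using wo_act[of v "[]"] by (simp add: cc_def)

lemma absn: "\<bar>x\<bar> = sgn x * (x::int)" by (simp add: sgn_if)

lemma subA: "valid v \<Longrightarrow> \<exists>j. bs_eq m n (gpow GA k @ word_of v) (word_of (mulA k v) @ gpow GA j)"
proof (induction v arbitrary: k)
  case Nil show ?case by (rule exI[of _ k]) (simp add: bs_eq.bs_refl)
next
  case (Cons x r)
  obtain e s where x: "x = (e,s)" by fastforce
  have vr: "valid r" using Cons.prems x by simp
  define e' where "e' = (e+k) mod MM s"
  define q where "q = (e+k) div MM s"
  define c where "c = q * CR s"
  have ek: "k + e = e' + q * MM s" by (simp add: e'_def q_def)
  obtain j where j: "bs_eq m n (gpow GA c @ word_of r) (word_of (mulA c r) @ gpow GA j)"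
    using Cons.IH[OF vr] by blast
  have rel: "bs_eq m n (gpow GA (q * MM s) @ [(GT, \<not>s)]) ([(GT, \<not>s)] @ gpow GA c)"
  proof (cases s)
    case True
    have h1: "q * MM s = (q * sgn n) * n" and h2: "c = (q * sgn n) * m" using True by (simp_all add: MM_def CR_def absn c_def)
    show ?thesis unfolding h1 h2 using relZ[of m n "q * sgn n"] True by simp
  next
    case False
    have h1: "q * MM s = (q * sgn m) * m" and h2: "c = (q * sgn m) * n" using False by (simp_all add: MM_def CR_def absn c_def)
    show ?thesis unfolding h1 h2 using bs_eq.bs_sym[OF relZi[of m n "q * sgn m"]] False by simp
  qed
  have "bs_eq m n (gpow GA k @ word_of ((e,s)#r)) ((gpow GA k @ gpow GA e) @ [(GT, \<not>s)] @ word_of r)" by (simp add: bs_eq.bs_refl)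
  also have "bs_eq m n \<dots> (gpow GA (e' + q * MM s) @ [(GT, \<not>s)] @ word_of r)"
    using gpow_add[of m n GA k e] ek by (intro bs_l) simp
  also have "bs_eq m n \<dots> ((gpow GA e' @ gpow GA (q * MM s)) @ [(GT, \<not>s)] @ word_of r)"
    using bs_eq.bs_sym[OF gpow_add[of m n GA e' "q * MM s"]] by (intro bs_l)
  also have "(gpow GA e' @ gpow GA (q * MM s)) @ [(GT, \<not>s)] @ word_of r = gpow GA e' @ (gpow GA (q * MM s) @ [(GT, \<not>s)]) @ word_of r" by simp
  also have "bs_eq m n \<dots> (gpow GA e' @ ([(GT, \<not>s)] @ gpow GA c) @ word_of r)"
    using rel by (intro bs_r bs_l)
  also have "gpow GA e' @ ([(GT, \<not>s)] @ gpow GA c) @ word_of r = (gpow GA e' @ [(GT, \<not>s)]) @ (gpow GA c @ word_of r)" by simp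
  also have "bs_eq m n \<dots> ((gpow GA e' @ [(GT, \<not>s)]) @ (word_of (mulA c r) @ gpow GA j))"
    using j by (intro bs_r)
  also have "(gpow GA e' @ [(GT, \<not>s)]) @ (word_of (mulA c r) @ gpow GA j) = word_of (mulA k ((e,s)#r)) @ gpow GA j"
    by (simp add: e'_def q_def c_def)
  finally show ?case using x by blast
qed

lemma L1: "valid v \<Longrightarrow> \<exists>j. bs_eq m n ([x] @ word_of v) (word_of (act1 x v) @ gpow GA j)"
proof (cases x rule: act1.cases)
  case (1 b)
  assume vv: "valid v"
  have "[x] = gpow GA (if b then -1 else 1)" using 1 by (simp add: gpow_def)
  thus ?thesis using subA[OF vv, of "if b then -1 else 1"] 1 by simp
next
  case (2 b)
  assume vv: "valid v"
  show ?thesis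
  proof (cases "v \<noteq> [] \<and> hd v = (0, b)")
    case True
    then obtain r where r: "v = (0,b) # r" by (cases v) auto
    have "[x] @ word_of v = [] @ [(GT,b), letter_inv (GT,b)] @ word_of r"
      using r 2 by (cases b) (auto simp: letter_inv_def)
    hence "bs_eq m n ([x] @ word_of v) (word_of r @ gpow GA 0)" using bs_eq.bs_cancel[of m n "[]" "(GT,b)" "word_of r"] by simp
    moreover have "act1 x v = r" using r 2 by (simp add: tS_def)
    ultimately show ?thesis by blast
  next
    case False
    hence "act1 x v = (0, \<not>b) # v" using 2 by (auto simp: tS_def)
    hence "[x] @ word_of v = word_of (act1 x v) @ gpow GA 0" using 2 by simp
    thus ?thesis using bs_eq.bs_refl by metis
  qed
qed

lemma G: "\<exists>i. bs_eq m n g (word_of (cc g) @ gpow GA i)"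
proof (induction g)
  case Nil show ?case by (rule exI[of _ 0]) (simp add: cc_def bs_eq.bs_refl)
next
  case (Cons x g)
  obtain i where i: "bs_eq m n g (word_of (cc g) @ gpow GA i)" using Cons.IH by blast
  obtain j where j: "bs_eq m n ([x] @ word_of (cc g)) (word_of (act1 x (cc g)) @ gpow GA j)"
    using L1[OF cc_valid] by blast
  have "bs_eq m n (x # g) ([x] @ (word_of (cc g) @ gpow GA i))" using i bs_r[of m n g _ "[x]"] by simp
  also have "[x] @ (word_of (cc g) @ gpow GA i) = ([x] @ word_of (cc g)) @ gpow GA i" by simp
  also have "bs_eq m n \<dots> ((word_of (act1 x (cc g)) @ gpow GA j) @ gpow GA i)" using j by (rule bs_l)
  also have "(word_of (act1 x (cc g)) @ gpow GA j) @ gpow GA i = word_of (act1 x (cc g)) @ (gpow GA j @ gpow GA i)" by simp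
  also have "bs_eq m n \<dots> (word_of (act1 x (cc g)) @ gpow GA (j+i))" by (intro bs_r gpow_add)
  finally show ?case by (auto simp: cc_def act_Cons)
qed

lemma coset: "cc g = cc h \<Longrightarrow> \<exists>k. bs_eq m n h (g @ gpow GA k)"
proof -
  assume e: "cc g = cc h"
  obtain i where i: "bs_eq m n g (word_of (cc g) @ gpow GA i)" using G by blast
  obtain j where j: "bs_eq m n h (word_of (cc g) @ gpow GA j)" using G e by metis
  have "bs_eq m n (g @ gpow GA (j - i)) ((word_of (cc g) @ gpow GA i) @ gpow GA (j-i))" using i by (rule bs_l)
  also have "(word_of (cc g) @ gpow GA i) @ gpow GA (j-i) = word_of (cc g) @ (gpow GA i @ gpow GA (j-i))" by simp
  also have "bs_eq m n \<dots> (word_of (cc g) @ gpow GA j)" using gpow_add[of m n GA i "j-i"] by (intro bs_r) simp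
  finally show ?thesis using j by (meson bs_eq.bs_sym bs_tr)
qed

lemma cc_eq: "bs_eq m n g h \<Longrightarrow> cc g = cc h"
  by (simp add: cc_def bs_eq_act)

lemma cc_append: "cc (g @ h) = act g (cc h)" by (simp add: cc_def act_append)

end


definition st :: "(int \<times> bool) list \<Rightarrow> (int \<times> bool) list \<Rightarrow> bool" where
  "st v v' \<longleftrightarrow> (\<exists>e. v' = v @ [(e,True)]) \<or> (\<exists>e. v = v' @ [(e,False)])"

definition stpath :: "(nat \<Rightarrow> (int \<times> bool) list) \<Rightarrow> nat \<Rightarrow> bool" where
  "stpath P D \<longleftrightarrow> (\<forall>j<D. st (P j) (P (Suc j)))"

lemma stpath_struct:
  assumes "stpath P D"
  shows "\<exists>r\<le>D. r \<le> length (P 0) \<and> (\<forall>j\<le>r. P j = take (length (P 0) - j) (P 0))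
    \<and> (\<forall>j. r \<le> j \<and> j \<le> D \<longrightarrow> P j = take (length (P 0) - r + (j - r)) (P D))
    \<and> length (P D) = length (P 0) - r + (D - r)
    \<and> (\<forall>i. length (P 0) - r \<le> i \<and> i < length (P D) \<longrightarrow> snd (P D ! i))"
  using assms
proof (induction D)
  case 0 show ?case by (intro exI[of _ 0]) auto
next
  case (Suc D)
  let ?L = "length (P 0)"
  have sp: "stpath P D" using Suc.prems by (simp add: stpath_def)
  obtain r where r: "r \<le> D" "r \<le> ?L" "\<forall>j\<le>r. P j = take (?L - j) (P 0)"
    "\<forall>j. r \<le> j \<and> j \<le> D \<longrightarrow> P j = take (?L - r + (j - r)) (P D)"
    "length (P D) = ?L - r + (D - r)"
    "\<forall>i. ?L - r \<le> i \<and> i < length (P D) \<longrightarrow> snd (P D ! i)"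
    using Suc.IH[OF sp] by blast
  have "st (P D) (P (Suc D))" using Suc.prems by (simp add: stpath_def)
  then consider e where "P (Suc D) = P D @ [(e,True)]" | e where "P D = P (Suc D) @ [(e,False)]"
    unfolding st_def by blast
  thus ?case
  proof cases
    case (1 e)
    show ?thesis
    proof (intro exI[of _ r] conjI allI impI)
      show "r \<le> Suc D" "r \<le> ?L" using r(1,2) by auto
      show "\<And>j. j \<le> r \<Longrightarrow> P j = take (?L - j) (P 0)" using r(3) by blast
      show "length (P (Suc D)) = ?L - r + (Suc D - r)" using r(1,5) 1 by simp
      fix j assume j: "r \<le> j \<and> j \<le> Suc D"
      show "P j = take (?L - r + (j - r)) (P (Suc D))"
      proof (cases "j = Suc D")
        case True thus ?thesis using r(1,2,5) 1 by simp
      next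
        case False
        hence pj: "P j = take (?L - r + (j - r)) (P D)" using r(4) j by (meson le_SucE)
        have "?L - r + (j - r) \<le> length (P D)" using r(1,2,5) j False by arith
        thus ?thesis using 1 pj by simp
      qed
    next
      fix i assume i: "?L - r \<le> i \<and> i < length (P (Suc D))"
      show "snd (P (Suc D) ! i)"
        using i r(6) 1 by (cases "i < length (P D)") (auto simp: nth_append)
    qed
  next
    case (2 e)
    have rD: "r = D"
    proof (rule ccontr)
      assume "r \<noteq> D"
      hence "?L - r \<le> length (P D) - 1" "length (P D) - 1 < length (P D)" using r(1,5) 2 by auto
      hence "snd (P D ! (length (P D) - 1))" using r(6) by blast
      thus False using 2 by (simp add: nth_append)
    qed
    have len: "length (P D) = ?L - D" using r(5) rD by simp
    have LD: "Suc D \<le> ?L" using len 2 r(2) rD by auto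
    show ?thesis
    proof (intro exI[of _ "Suc D"] conjI allI impI)
      show "Suc D \<le> Suc D" "Suc D \<le> ?L" using LD by auto
      fix j assume j: "j \<le> Suc D"
      show "P j = take (?L - j) (P 0)"
      proof (cases "j = Suc D")
        case False hence "j \<le> r" using rD j by simp
        thus ?thesis using r(3) by blast
      next
        case True
        have "P D = take (?L - D) (P 0)" using r(3) rD by blast
        hence "butlast (P D) = take (?L - D - 1) (P 0)" using LD by (simp add: butlast_take)
        hence "P (Suc D) = take (?L - Suc D) (P 0)" using 2 by simp
        thus ?thesis using True by simp
      qed
    next
      fix j assume "Suc D \<le> j \<and> j \<le> Suc D"
      hence "j = Suc D" by simp
      thus "P j = take (?L - Suc D + (j - Suc D)) (P (Suc D))" using len 2 LD by simp
    next
      show "length (P (Suc D)) = ?L - Suc D + (Suc D - Suc D)" using len 2 by simp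
    next
      fix i assume "?L - Suc D \<le> i \<and> i < length (P (Suc D))"
      moreover have "length (P D) = Suc (length (P (Suc D)))" using 2 by simp
      ultimately show "snd (P (Suc D) ! i)" using len by linarith
    qed
  qed
qed

lemma stpath_unique:
  assumes "stpath P D" "stpath Q D" "P 0 = Q 0" "P D = Q D" "j \<le> D"
  shows "P j = Q j"
proof -
  obtain r where r: "r \<le> D" "r \<le> length (P 0)" "\<forall>j\<le>r. P j = take (length (P 0) - j) (P 0)"
    "\<forall>j. r \<le> j \<and> j \<le> D \<longrightarrow> P j = take (length (P 0) - r + (j - r)) (P D)"
    "length (P D) = length (P 0) - r + (D - r)"
    using stpath_struct[OF assms(1)] by blast
  obtain r' where r': "r' \<le> D" "r' \<le> length (Q 0)" "\<forall>j\<le>r'. Q j = take (length (Q 0) - j) (Q 0)"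
    "\<forall>j. r' \<le> j \<and> j \<le> D \<longrightarrow> Q j = take (length (Q 0) - r' + (j - r')) (Q D)"
    "length (Q D) = length (Q 0) - r' + (D - r')"
    using stpath_struct[OF assms(2)] by blast
  have "r = r'" using r(1,2,5) r'(1,2,5) assms(3,4) by simp
  show ?thesis
  proof (cases "j \<le> r")
    case True
    have "P j = take (length (P 0) - j) (P 0)" using r(3) True by blast
    moreover have "Q j = take (length (Q 0) - j) (Q 0)" using r'(3) True \<open>r = r'\<close> by blast
    ultimately show ?thesis using assms(3) by simp
  next
    case False
    have "P j = take (length (P 0) - r + (j - r)) (P D)" using r(4) False assms(5) by (meson not_le_imp_less less_imp_le)
    moreover have "Q j = take (length (Q 0) - r' + (j - r')) (Q D)" using r'(4) False assms(5) \<open>r = r'\<close> by (meson not_le_imp_less less_imp_le)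
    ultimately show ?thesis using assms(3,4) \<open>r = r'\<close> by simp
  qed
qed

definition ht :: "(int \<times> bool) list \<Rightarrow> int" where
  "ht v = sum_list (map (\<lambda>x. if snd x then 1 else -1) v)"

lemma st_ht: "st v v' \<Longrightarrow> ht v' = ht v + 1"
  by (auto simp: st_def ht_def)

lemma stpath_ht: "stpath P D \<Longrightarrow> j \<le> D \<Longrightarrow> ht (P j) = ht (P 0) + int j"
proof (induction j)
  case 0 thus ?case by simp
next
  case (Suc j)
  hence "st (P j) (P (Suc j))" by (simp add: stpath_def)
  thus ?case using Suc by (simp add: st_ht)
qed

fun tw :: "letter \<Rightarrow> int" where
  "tw (GA, b) = 0"
| "tw (GT, b) = (if b then -1 else 1)"

definition tsum :: "word \<Rightarrow> int" where "tsum w = sum_list (map tw w)"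

lemma tsum_append: "tsum (u @ w) = tsum u + tsum w" by (simp add: tsum_def)

lemma tsum_gpowT: "tsum (gpow GT k) = k"
  by (auto simp: tsum_def gpow_def sum_list_replicate)

context BS begin

lemma ht_mulA: "ht (mulA k v) = ht v"
  by (induction v arbitrary: k) (auto simp: ht_def)

lemma ht_tS: "valid v \<Longrightarrow> ht (tS s v) = ht v + (if s then 1 else -1)"
  by (cases v) (auto simp: tS_def ht_def)

lemma ht_act: "valid v \<Longrightarrow> ht (act w v) = ht v + tsum w"
proof (induction w)
  case Nil thus ?case by (simp add: tsum_def)
next
  case (Cons x w)
  have v: "valid (act w v)" using Cons.prems by (rule act_valid)
  show ?case
    using Cons ht_tS[OF v] by (cases x rule: act1.cases) (auto simp: act_Cons ht_mulA tsum_def)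
qed

lemma ht_cc: "ht (cc g) = tsum g"
  using ht_act[of "[]" g] by (simp add: cc_def ht_def)

lemma word_of_append: "word_of (a @ b) = word_of a @ word_of b"
  by (induction a rule: word_of.induct) auto

lemma valid_snoc: "valid (v @ [(e,s)]) \<longleftrightarrow> valid v \<and> 0 \<le> e \<and> e < MM s \<and> (v \<noteq> [] \<longrightarrow> \<not>(snd (last v) \<noteq> s \<and> e = 0))"
proof (induction v rule: valid.induct)
  case 1 thus ?case by simp
next
  case (2 e' s' r)
  thus ?case by (cases r) auto
qed

lemma fwd: "st (cc y) (cc (y @ [(GT,False)]))"
proof -
  let ?v = "cc y"
  have vv: "valid ?v" by (rule cc_valid)
  obtain i where i: "bs_eq m n y (word_of ?v @ gpow GA i)" using G by blast
  let ?e = "i mod \<bar>n\<bar>"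
  have e: "0 \<le> ?e" "?e < \<bar>n\<bar>" using n0 by auto
  have "cc (y @ [(GT,False)]) = act y [(0,True)]" by (simp add: cc_def act_append act_Cons tS_def)
  also have "\<dots> = act (word_of ?v @ gpow GA i) [(0,True)]"
    using n0 by (intro bs_eq_act[OF i]) (simp add: MM_def)
  also have "\<dots> = act (word_of ?v) [(?e, True)]"
    using n0 by (simp add: act_append act_gpowA MM_def)
  finally have c: "cc (y @ [(GT,False)]) = act (word_of ?v) [(?e, True)]" .
  show ?thesis
  proof (cases "valid (?v @ [(?e,True)])")
    case True
    thus ?thesis using c wo_act[OF True] by (simp add: st_def)
  next
    case False
    hence ne: "?v \<noteq> []" and l: "snd (last ?v) = False" "?e = 0" using vv e valid_snoc[of ?v ?e True]
      by (auto simp: MM_def)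
    obtain w x where w: "?v = w @ [(x,False)]" using ne l
      by (metis append_butlast_last_id prod.collapse)
    have vw: "valid w" using vv w valid_append1 by metis
    have "act (word_of ?v) [(?e, True)] = act (word_of w) (act (gpow GA x) (tS False [(0,True)]))"
      using l w by (simp add: word_of_append act_append act_Cons)
    also have "\<dots> = w" using wo_act[of w "[]"] vw by (simp add: tS_def act_gpowA)
    finally show ?thesis using c w by (simp add: st_def)
  qed
qed

end


lemma stpath_concat:
  assumes "stpath P d" "stpath Q e" "P d = Q 0"
  shows "stpath (\<lambda>j. if j \<le> d then P j else Q (j - d)) (d + e)"
  unfolding stpath_def
proof (intro allI impI)
  fix j assume j: "j < d + e"
  show "st (if j \<le> d then P j else Q (j - d)) (if Suc j \<le> d then P (Suc j) else Q (Suc j - d))"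
  proof (cases "Suc j \<le> d")
    case True thus ?thesis using assms(1) by (simp add: stpath_def)
  next
    case False
    show ?thesis
    proof (cases "j = d")
      case True
      have "st (Q 0) (Q (Suc 0))" using assms(2) j True by (simp add: stpath_def)
      thus ?thesis using True assms(3) by simp
    next
      case False
      hence "Suc j - d = Suc (j - d)" "j - d < e" using \<open>\<not> Suc j \<le> d\<close> j by auto
      thus ?thesis using assms(2) False \<open>\<not> Suc j \<le> d\<close> by (simp add: stpath_def)
    qed
  qed
qed

context BS begin

lemma bs_elem_eq: "bs_elem m n g = bs_elem m n h \<longleftrightarrow> bs_eq m n g h"
proof
  assume "bs_elem m n g = bs_elem m n h"
  moreover have "h \<in> bs_elem m n h" by (simp add: bs_elem_def bs_eq.bs_refl)
  ultimately have "h \<in> bs_elem m n g" by simp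
  thus "bs_eq m n g h" by (simp add: bs_elem_def)
next
  assume a: "bs_eq m n g h"
  show "bs_elem m n g = bs_elem m n h"
    unfolding bs_elem_def using a by (auto intro: bs_tr bs_eq.bs_sym)
qed

lemma cc_gpowA: "cc (g @ gpow GA k) = cc g"
  by (simp add: cc_def act_append act_gpowA)

lemma mem_lineA: "bs_elem m n h \<in> line m n GA g \<longleftrightarrow> cc h = cc g"
proof
  assume "bs_elem m n h \<in> line m n GA g"
  then obtain k where "bs_elem m n h = bs_elem m n (g @ gpow GA k)" by (auto simp: line_def)
  hence "bs_eq m n h (g @ gpow GA k)" by (simp add: bs_elem_eq)
  hence "cc h = cc (g @ gpow GA k)" by (rule cc_eq)
  thus "cc h = cc g" by (simp add: cc_gpowA)
next
  assume "cc h = cc g"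
  then obtain k where "bs_eq m n h (g @ gpow GA k)" using coset by metis
  hence "bs_elem m n h = bs_elem m n (g @ gpow GA k)" by (simp add: bs_elem_eq)
  thus "bs_elem m n h \<in> line m n GA g" by (auto simp: line_def)
qed

lemma meetT: "line m n GT h \<inter> line m n GA g \<noteq> {} \<longleftrightarrow> (\<exists>k. cc (h @ gpow GT k) = cc g)"
proof
  assume "line m n GT h \<inter> line m n GA g \<noteq> {}"
  then obtain X where X: "X \<in> line m n GT h" "X \<in> line m n GA g" by blast
  then obtain k where "X = bs_elem m n (h @ gpow GT k)" by (auto simp: line_def)
  thus "\<exists>k. cc (h @ gpow GT k) = cc g" using X(2) mem_lineA by blast
next
  assume "\<exists>k. cc (h @ gpow GT k) = cc g"
  then obtain k where k: "cc (h @ gpow GT k) = cc g" by blast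
  have "bs_elem m n (h @ gpow GT k) \<in> line m n GT h" by (auto simp: line_def)
  moreover have "bs_elem m n (h @ gpow GT k) \<in> line m n GA g" using k mem_lineA by blast
  ultimately show "line m n GT h \<inter> line m n GA g \<noteq> {}" by blast
qed

lemma lineA_inter: "line m n GA g \<inter> line m n GA g' \<noteq> {} \<Longrightarrow> line m n GA g = line m n GA g'"
proof -
  assume "line m n GA g \<inter> line m n GA g' \<noteq> {}"
  then obtain X where X: "X \<in> line m n GA g" "X \<in> line m n GA g'" by blast
  then obtain k where k: "X = bs_elem m n (g @ gpow GA k)" by (auto simp: line_def)
  have e: "cc g = cc g'" using X(2) k mem_lineA cc_gpowA by metis
  show ?thesis
  proof (intro set_eqI iffI)
    fix Y assume "Y \<in> line m n GA g"
    then obtain k where k: "Y = bs_elem m n (g @ gpow GA k)" by (auto simp: line_def)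
    thus "Y \<in> line m n GA g'" using mem_lineA cc_gpowA e by metis
  next
    fix Y assume "Y \<in> line m n GA g'"
    then obtain k where k: "Y = bs_elem m n (g' @ gpow GA k)" by (auto simp: line_def)
    thus "Y \<in> line m n GA g" using mem_lineA cc_gpowA e by metis
  qed
qed

lemma lines_ne: "line m n s g \<noteq> {}"
  by (auto simp: line_def)

lemma Llink_char:
  assumes u: "u \<in> alines m n"
  shows "Llink m n (VA u) = VT ` {l \<in> tlines m n. l \<inter> u \<noteq> {}}"
proof (intro set_eqI iffI)
  fix y assume "y \<in> Llink m n (VA u)"
  hence a: "y \<in> Lverts m n" "VA u \<noteq> y" "u \<inter> lset y \<noteq> {}" by (auto simp: Llink_def Ladj_def)
  show "y \<in> VT ` {l \<in> tlines m n. l \<inter> u \<noteq> {}}"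
  proof (cases y)
    case (VA u')
    hence "u' \<in> alines m n" using a(1) by (auto simp: Lverts_def)
    then obtain g' where g': "u' = line m n GA g'" by (auto simp: alines_def)
    obtain g where g: "u = line m n GA g" using u by (auto simp: alines_def)
    have "u = u'" using lineA_inter a(3) VA g g' by simp
    thus ?thesis using a(2) VA by simp
  next
    case (VT l)
    hence "l \<in> tlines m n" using a(1) by (auto simp: Lverts_def)
    thus ?thesis using VT a(3) by auto
  qed
next
  fix y assume "y \<in> VT ` {l \<in> tlines m n. l \<inter> u \<noteq> {}}"
  then obtain l where l: "y = VT l" "l \<in> tlines m n" "l \<inter> u \<noteq> {}" by blast
  show "y \<in> Llink m n (VA u)" using l u by (auto simp: Llink_def Ladj_def Lverts_def)
qed

definition cd :: "word set set \<Rightarrow> (int \<times> bool) list" where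
  "cd l = cc (SOME g. l = line m n GA g)"

lemma cd_line: "cd (line m n GA g) = cc g"
proof -
  let ?g = "SOME g'. line m n GA g = line m n GA g'"
  have e: "line m n GA g = line m n GA ?g" by (rule someI[of _ g]) simp
  have "bs_elem m n (?g @ gpow GA 0) \<in> line m n GA ?g" unfolding line_def by blast
  hence "bs_elem m n ?g \<in> line m n GA g" using e by simp
  hence "cc ?g = cc g" using mem_lineA by blast
  thus ?thesis by (simp add: cd_def)
qed

lemma Tedge_st: "Tedge m n l l' \<Longrightarrow> st (cd l) (cd l')"
proof -
  assume t: "Tedge m n l l'"
  then obtain g g' where g: "l = line m n GA g" "l' = line m n GA g'" by (auto simp: Tedge_def alines_def)
  obtain y where y: "bs_elem m n y \<in> l" "bs_elem m n (y @ [(GT, False)]) \<in> l'" using t by (auto simp: Tedge_def)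
  have "cc y = cd l" "cc (y @ [(GT, False)]) = cd l'" using y g mem_lineA cd_line by auto
  thus ?thesis using fwd by metis
qed

lemma Tless_path:
  assumes "Tless m n u1 u2"
  shows "\<exists>d P. d \<ge> 1 \<and> stpath P d \<and> P 0 = cd u1 \<and> P d = cd u2"
proof -
  from assms have ne: "u1 \<noteq> u2" and le: "Tle m n u1 u2" by (auto simp: Tless_def)
  obtain p where p: "Tgeodesic m n p u1 u2" using le by (auto simp: Tle_def)
  have fw: "\<And>i. Suc i < length p \<Longrightarrow> Tedge m n (p ! i) (p ! Suc i)" using le p by (auto simp: Tle_def)
  have tp: "p \<noteq> []" "hd p = u1" "last p = u2" using p by (auto simp: Tgeodesic_def Tpath_def)
  define d where "d = length p - 1"
  have d1: "d \<ge> 1"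
  proof (rule ccontr)
    assume "\<not> d \<ge> 1"
    moreover have "length p \<noteq> 0" using tp(1) by simp
    ultimately have "length p = 1" using d_def by linarith
    hence "hd p = last p" by (cases p) auto
    thus False using tp ne by simp
  qed
  define P where "P i = cd (p ! i)" for i
  have "stpath P d" unfolding stpath_def P_def using fw Tedge_st d_def by auto
  moreover have "P 0 = cd u1" using tp by (simp add: P_def hd_conv_nth)
  moreover have "P d = cd u2" using tp by (simp add: P_def d_def last_conv_nth)
  ultimately show ?thesis using d1 by blast
qed

lemma tpath: "stpath (\<lambda>j. cc (x @ gpow GT (int j))) D"
  unfolding stpath_def
proof (intro allI impI)
  fix j
  have "gpow GT (int (Suc j)) = replicate (Suc j) (GT,False)" by (simp add: gpow_def del: of_nat_Suc)
  hence "gpow GT (int (Suc j)) = gpow GT (int j) @ [(GT,False)]"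
    by (simp add: gpow_def replicate_append_same del: of_nat_Suc)
  thus "st (cc (x @ gpow GT (int j))) (cc (x @ gpow GT (int (Suc j))))" using fwd[of "x @ gpow GT (int j)"] by simp
qed

lemma cc_shift: "cc ((h @ gpow s a) @ gpow s b) = cc (h @ gpow s (a+b))"
proof -
  have "bs_eq m n (h @ (gpow s a @ gpow s b)) (h @ gpow s (a+b))" by (intro bs_r gpow_add)
  thus ?thesis by (simp add: cc_eq)
qed

lemma ht_ccT: "ht (cc (x @ gpow GT k)) = ht (cc x) + k"
  by (simp add: ht_cc tsum_append tsum_gpowT)

lemma repT: "act (gpow GT (int j)) [] = replicate j (0,True)"
proof -
  have "(tS True ^^ j) [] = replicate j (0,True)"
    by (induction j) (auto simp: tS_def)
  thus ?thesis by (simp add: gpow_def act_repT)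
qed

lemma repF: "act (gpow GT (- int j)) [] = replicate j (0,False)"
proof -
  have "(tS False ^^ j) [] = replicate j (0,False)"
    by (induction j) (auto simp: tS_def)
  thus ?thesis by (cases "j = 0") (simp_all add: gpow_def act_repT)
qed

definition winv :: "word \<Rightarrow> word" where "winv w = rev (map letter_inv w)"

lemma winv_cancel: "bs_eq m n (winv w @ w) []"
proof (induction w)
  case Nil thus ?case by (simp add: winv_def bs_eq.bs_refl)
next
  case (Cons x w)
  have "winv (x # w) @ (x # w) = winv w @ [letter_inv x, x] @ w" by (simp add: winv_def)
  hence "bs_eq m n (winv (x # w) @ (x # w)) (winv w @ w)" using bs_canc2 by metis
  thus ?case using Cons bs_tr by blast
qed

lemma act_inj: "valid a \<Longrightarrow> valid b \<Longrightarrow> act w a = act w b \<Longrightarrow> a = b"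
proof -
  assume va: "valid a" and vb: "valid b" and e: "act w a = act w b"
  have "a = act (winv w @ w) a" using bs_eq_act[OF winv_cancel va] by simp
  also have "\<dots> = act (winv w) (act w b)" using e by (simp add: act_append)
  also have "\<dots> = b" using bs_eq_act[OF winv_cancel vb] by (simp add: act_append)
  finally show ?thesis .
qed

lemma cc_pt: "cc (x @ gpow GA k @ gpow GT t) = act x (mulA k (act (gpow GT t) []))"
  by (simp add: cc_def act_append act_gpowA act_valid)

lemma cc_pt0: "cc (x @ gpow GT t) = act x (act (gpow GT t) [])"
  by (simp add: cc_def act_append)

lemma rep_valid: "valid (replicate j (0,s))"
proof (induction j)
  case 0 thus ?case by simp
next
  case (Suc j) thus ?case by (cases j) (auto simp: MM_pos)
qed

end


context BS begin

definition stabT :: "nat \<Rightarrow> int \<Rightarrow> bool" where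
  "stabT j k \<longleftrightarrow> mulA k (replicate j (0,True)) = replicate j (0,True)"
definition stabF :: "nat \<Rightarrow> int \<Rightarrow> bool" where
  "stabF j k \<longleftrightarrow> mulA k (replicate j (0,False)) = replicate j (0,False)"

lemma nq_div: "x \<noteq> 0 \<Longrightarrow> ((x::int) * q) div \<bar>x\<bar> * sgn x = q"
proof -
  assume x: "x \<noteq> 0"
  have "(sgn x * q) * \<bar>x\<bar> = (sgn x * \<bar>x\<bar>) * q" by (simp only: mult_ac)
  hence "x * q = (sgn x * q) * \<bar>x\<bar>" by (simp only: sgn_mult_abs)
  hence "(x * q) div \<bar>x\<bar> = ((sgn x * q) * \<bar>x\<bar>) div \<bar>x\<bar>" by (rule arg_cong)
  also have "\<dots> = sgn x * q" using x by (intro nonzero_mult_div_cancel_right) simp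
  finally have "(x * q) div \<bar>x\<bar> = sgn x * q" .
  thus ?thesis using x by (simp add: sgn_if)
qed

lemma stabT_0[simp]: "stabT 0 k" by (simp add: stabT_def)
lemma stabF_0[simp]: "stabF 0 k" by (simp add: stabF_def)

lemma stabT_Suc: "stabT (Suc j) k \<longleftrightarrow> (\<exists>q. k = n * q \<and> stabT j (q * m))"
proof -
  have "stabT (Suc j) k \<longleftrightarrow> k mod \<bar>n\<bar> = 0 \<and> stabT j (k div \<bar>n\<bar> * (sgn n * m))"
    by (simp add: stabT_def MM_def CR_def)
  also have "\<dots> \<longleftrightarrow> (\<exists>q. k = n * q \<and> stabT j (q * m))"
  proof
    assume a: "k mod \<bar>n\<bar> = 0 \<and> stabT j (k div \<bar>n\<bar> * (sgn n * m))"
    hence "\<bar>n\<bar> dvd k" by (simp add: dvd_eq_mod_eq_0)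
    hence "n dvd k" by simp
    then obtain q where q: "k = n * q" by (auto elim: dvdE)
    have eq: "k div \<bar>n\<bar> * (sgn n * m) = q * m" using nq_div[OF n0, of q] q by (simp only: mult.assoc[symmetric])
    have "stabT j (k div \<bar>n\<bar> * (sgn n * m))" using a by blast
    hence "stabT j (q * m)" unfolding eq .
    thus "\<exists>q. k = n * q \<and> stabT j (q * m)" using q by blast
  next
    assume "\<exists>q. k = n * q \<and> stabT j (q * m)"
    then obtain q where q: "k = n * q" "stabT j (q * m)" by blast
    have e1: "n * q div \<bar>n\<bar> * sgn n = q" by (rule nq_div[OF n0])
    have "k div \<bar>n\<bar> * (sgn n * m) = (n * q div \<bar>n\<bar> * sgn n) * m" using q(1) by (simp only: mult.assoc)
    also have "\<dots> = q * m" by (simp only: e1)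
    finally have eq: "k div \<bar>n\<bar> * (sgn n * m) = q * m" .
    have "k mod \<bar>n\<bar> = 0" using q(1) by simp
    thus "k mod \<bar>n\<bar> = 0 \<and> stabT j (k div \<bar>n\<bar> * (sgn n * m))" unfolding eq using q(2) by simp
  qed
  finally show ?thesis .
qed

lemma stabF_Suc: "stabF (Suc j) k \<longleftrightarrow> (\<exists>q. k = m * q \<and> stabF j (q * n))"
proof -
  have "stabF (Suc j) k \<longleftrightarrow> k mod \<bar>m\<bar> = 0 \<and> stabF j (k div \<bar>m\<bar> * (sgn m * n))"
    by (simp add: stabF_def MM_def CR_def)
  also have "\<dots> \<longleftrightarrow> (\<exists>q. k = m * q \<and> stabF j (q * n))"
  proof
    assume a: "k mod \<bar>m\<bar> = 0 \<and> stabF j (k div \<bar>m\<bar> * (sgn m * n))"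
    hence "\<bar>m\<bar> dvd k" by (simp add: dvd_eq_mod_eq_0)
    hence "m dvd k" by simp
    then obtain q where q: "k = m * q" by (auto elim: dvdE)
    have eq: "k div \<bar>m\<bar> * (sgn m * n) = q * n" using nq_div[OF m0, of q] q by (simp only: mult.assoc[symmetric])
    have "stabF j (k div \<bar>m\<bar> * (sgn m * n))" using a by blast
    hence "stabF j (q * n)" unfolding eq .
    thus "\<exists>q. k = m * q \<and> stabF j (q * n)" using q by blast
  next
    assume "\<exists>q. k = m * q \<and> stabF j (q * n)"
    then obtain q where q: "k = m * q" "stabF j (q * n)" by blast
    have e1: "m * q div \<bar>m\<bar> * sgn m = q" by (rule nq_div[OF m0])
    have "k div \<bar>m\<bar> * (sgn m * n) = (m * q div \<bar>m\<bar> * sgn m) * n" using q(1) by (simp only: mult.assoc)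
    also have "\<dots> = q * n" by (simp only: e1)
    finally have eq: "k div \<bar>m\<bar> * (sgn m * n) = q * n" .
    have "k mod \<bar>m\<bar> = 0" using q(1) by simp
    thus "k mod \<bar>m\<bar> = 0 \<and> stabF j (k div \<bar>m\<bar> * (sgn m * n))" unfolding eq using q(2) by simp
  qed
  finally show ?thesis .
qed

lemma stabT_mono: "stabT (Suc j) k \<Longrightarrow> stabT j k"
proof (induction j arbitrary: k)
  case 0 thus ?case by simp
next
  case (Suc j)
  then obtain q where q: "k = n * q" "stabT (Suc j) (q * m)" using stabT_Suc[of "Suc j" k] by blast
  have "stabT j (q * m)" using Suc.IH q(2) by blast
  thus ?case using q(1) stabT_Suc[of j k] by blast
qed

lemma stabT_mono': "stabT j k \<Longrightarrow> i \<le> j \<Longrightarrow> stabT i k"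
proof (induction j)
  case 0 thus ?case by simp
next
  case (Suc j)
  show ?case
  proof (cases "i = Suc j")
    case True thus ?thesis using Suc.prems by simp
  next
    case False thus ?thesis using Suc stabT_mono by simp
  qed
qed

lemma stabT_mult: "stabT j k \<Longrightarrow> stabT j (k * c)"
proof (induction j arbitrary: k)
  case 0 thus ?case by simp
next
  case (Suc j)
  then obtain q where q: "k = n * q" "stabT j (q * m)" using stabT_Suc by blast
  have "stabT j (q * m * c)" using Suc.IH q(2) by blast
  hence "stabT j ((q * c) * m)" by (simp add: mult_ac)
  thus ?case using q(1) stabT_Suc[of j "k*c"] by (metis mult.assoc)
qed

lemma stabF_mult: "stabF j k \<Longrightarrow> stabF j (k * c)"
proof (induction j arbitrary: k)
  case 0 thus ?case by simp
next
  case (Suc j)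
  then obtain q where q: "k = m * q" "stabF j (q * n)" using stabF_Suc by blast
  have "stabF j (q * n * c)" using Suc.IH q(2) by blast
  hence "stabF j ((q * c) * n)" by (simp add: mult_ac)
  thus ?case using q(1) stabF_Suc[of j "k*c"] by (metis mult.assoc)
qed

lemma stabT_pow: "stabT j (n ^ j)"
proof (induction j)
  case 0 thus ?case by simp
next
  case (Suc j)
  have "stabT j (n^j * m)" using Suc stabT_mult by blast
  thus ?case using stabT_Suc by auto
qed

lemma stabF_pow: "stabF j (m ^ j)"
proof (induction j)
  case 0 thus ?case by simp
next
  case (Suc j)
  have "stabF j (m^j * n)" using Suc stabF_mult by blast
  thus ?case using stabF_Suc by auto
qed

lemma stabT_strict:
  assumes mn: "\<bar>m\<bar> < \<bar>n\<bar>"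
  shows "\<exists>k. stabT j k \<and> \<not> stabT (Suc j) k"
proof (rule ccontr)
  assume "\<not> ?thesis"
  hence cl: "\<And>k. stabT j k \<Longrightarrow> stabT (Suc j) k" by blast
  have "\<And>N k. nat \<bar>k\<bar> = N \<Longrightarrow> k \<noteq> 0 \<Longrightarrow> stabT j k \<Longrightarrow> False"
  proof -
    fix N
    show "\<And>k. nat \<bar>k\<bar> = N \<Longrightarrow> k \<noteq> 0 \<Longrightarrow> stabT j k \<Longrightarrow> False"
    proof (induction N rule: less_induct)
      case (less N k)
      obtain q where q: "k = n * q" "stabT j (q * m)" using cl[OF less.prems(3)] stabT_Suc by blast
      have q0: "q \<noteq> 0" using q less.prems by auto
      have "\<bar>q * m\<bar> < \<bar>k\<bar>" using q(1) q0 mn by (simp add: abs_mult mult.commute)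
      moreover have "q * m \<noteq> 0" using q0 m0 by simp
      moreover have "nat \<bar>q * m\<bar> < N" using less.prems(1) calculation(1) by simp
      ultimately show False using less.IH[OF _ refl _ q(2)] by blast
    qed
  qed
  moreover have "n ^ j \<noteq> 0" using n0 by simp
  ultimately show False using stabT_pow by blast
qed

lemma two_pow_gt: "(2::int) ^ k > int k"
proof (induction k)
  case 0 thus ?case by simp
next
  case (Suc k)
  have "(1::int) \<le> 2^k" by simp
  thus ?case using Suc by (simp only: power_Suc of_nat_Suc)
qed

lemma stabF_strict:
  assumes nd: "\<not> m dvd n"
  shows "\<exists>k. stabF j k \<and> \<not> stabF (Suc j) k"
proof (rule ccontr)
  assume "\<not> ?thesis"
  hence cl: "\<And>k. stabF j k \<Longrightarrow> stabF (Suc j) k" by blast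
  have it: "\<exists>z. stabF j z \<and> z * m^i = m^j * n^i" for i
  proof (induction i)
    case 0 show ?case using stabF_pow by auto
  next
    case (Suc i)
    then obtain z where z: "stabF j z" "z * m^i = m^j * n^i" by blast
    obtain q where q: "z = m * q" "stabF j (q * n)" using cl[OF z(1)] stabF_Suc by blast
    have "(q * n) * m ^ Suc i = (m * q) * m^i * n" by (simp add: mult_ac)
    also have "\<dots> = m^j * n ^ Suc i" using z(2) q(1) by (simp add: mult_ac)
    finally show ?case using q(2) by blast
  qed
  have g0: "gcd m n \<noteq> 0" using m0 by simp
  obtain m' n' where mn': "m = m' * gcd m n" "n = n' * gcd m n" "coprime m' n'"
    using gcd_coprime_exists[OF g0] by blast
  have m'0: "m' \<noteq> 0" using mn' m0 by auto
  have m'1: "\<bar>m'\<bar> \<noteq> 1"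
  proof
    assume "\<bar>m'\<bar> = 1"
    have "\<bar>m\<bar> = \<bar>m' * gcd m n\<bar>" using mn'(1) by (rule arg_cong)
    hence "\<bar>m\<bar> = \<bar>m'\<bar> * \<bar>gcd m n\<bar>" by (simp only: abs_mult)
    hence "\<bar>m\<bar> = gcd m n" using \<open>\<bar>m'\<bar> = 1\<close> by simp
    hence "\<bar>m\<bar> dvd n" by simp
    hence "m dvd n" by simp
    thus False using nd by simp
  qed
  have m'2: "\<bar>m'\<bar> \<ge> 2" using m'0 m'1 by linarith
  have dv: "m' ^ i dvd m ^ j" for i
  proof -
    obtain z where z: "stabF j z" "z * m^i = m^j * n^i" using it by blast
    have d1: "m^i dvd m^j * n^i" unfolding z(2)[symmetric] by simp
    obtain g where g: "g = gcd m n" by blast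
    have mg: "m = m' * g" "n = n' * g" using mn'(1,2) g by simp_all
    have p1: "m^i = g^i * m'^i" using mg(1) by (simp add: power_mult_distrib)
    have p2: "m^j * n^i = g^i * (m^j * n'^i)" using mg(2) by (simp add: power_mult_distrib)
    have "g^i * m'^i dvd g^i * (m^j * n'^i)" using d1 unfolding p1 p2 .
    hence "m'^i dvd m^j * n'^i" using g0 g m0 by simp
    thus ?thesis using mn'(3) by (simp add: coprime_dvd_mult_left_iff)
  qed
  let ?i = "nat \<bar>m^j\<bar>"
  have "\<bar>m' ^ ?i\<bar> \<le> \<bar>m^j\<bar>" using dv[of ?i] m0 by (intro dvd_imp_le_int) auto
  moreover have "\<bar>m' ^ ?i\<bar> \<ge> 2 ^ ?i" using m'2 by (simp add: power_abs power_mono)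
  moreover have "(2::int) ^ ?i > int ?i" using two_pow_gt by blast
  ultimately show False by simp
qed

lemma stabF_dvd: "m dvd n \<Longrightarrow> m dvd k \<Longrightarrow> stabF j k"
proof (induction j arbitrary: k)
  case 0 thus ?case by simp
next
  case (Suc j)
  obtain q where q: "k = m * q" using Suc.prems by blast
  have "m dvd q * n" using Suc.prems by simp
  thus ?case using Suc.IH Suc.prems q stabF_Suc by blast
qed

lemma stabT_dvd: "stabT j k \<Longrightarrow> j \<ge> 1 \<Longrightarrow> n dvd k"
  using stabT_mono'[of j k 1] stabT_Suc[of 0 k] by auto

end


context BS begin

definition meets :: "word \<Rightarrow> (int \<times> bool) list \<Rightarrow> bool" where
  "meets h v \<longleftrightarrow> (\<exists>k. cc (h @ gpow GT k) = v)"

lemma meet_k: "cc (h @ gpow GT k) = v \<Longrightarrow> cc (h @ gpow GT k') = v' \<Longrightarrow> k' - k = ht v' - ht v"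
  using ht_ccT[of h k] ht_ccT[of h k'] by auto

lemma pathQ: "stpath Q D \<Longrightarrow> cc y = Q 0 \<Longrightarrow> cc (y @ gpow GT (int D)) = Q D \<Longrightarrow> j \<le> D
   \<Longrightarrow> cc (y @ gpow GT (int j)) = Q j"
  using stpath_unique[OF tpath[of y D], of Q j] by simp

lemma cc_shift': "cc (h @ gpow s a @ gpow s b) = cc (h @ gpow s (a+b))"
  using cc_shift by simp

lemma cc_shift3: "cc (h @ gpow s a @ gpow s b @ gpow s c) = cc (h @ gpow s (a+b+c))"
  using cc_shift[of "h @ gpow s a" s b c] cc_shift'[of h s a "b+c"] by (simp add: add.assoc)

lemma cc_bs: "bs_eq m n z z' \<Longrightarrow> cc (z @ w) = cc (z' @ w)"
  by (intro cc_eq bs_l)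

context
  fixes Q :: "nat \<Rightarrow> (int \<times> bool) list" and D d :: nat
  assumes Qp: "stpath Q D" and d1: "1 \<le> d" and dD: "d < D"
begin

lemma hQ: "j \<le> D \<Longrightarrow> ht (Q j) = ht (Q 0) + int j"
  by (rule stpath_ht[OF Qp])

lemma base:
  assumes "meets h (Q 0)" "meets h (Q D)"
  obtains k1 where "\<And>j. j \<le> D \<Longrightarrow> cc (h @ gpow GT k1 @ gpow GT (int j)) = Q j"
proof -
  obtain k1 k3 where k: "cc (h @ gpow GT k1) = Q 0" "cc (h @ gpow GT k3) = Q D"
    using assms by (auto simp: meets_def)
  have "k3 - k1 = int D" using meet_k[OF k] hQ[of D] by simp
  hence "k1 + int D = k3" by simp
  hence "cc ((h @ gpow GT k1) @ gpow GT (int D)) = Q D" using k(2) by (simp add: cc_shift')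
  hence H: "\<And>j. j \<le> D \<Longrightarrow> cc ((h @ gpow GT k1) @ gpow GT (int j)) = Q j"
    using pathQ[OF Qp] k(1) by blast
  show ?thesis by (rule that[of k1]) (use H in simp)
qed

lemma claimA: "meets h (Q 0) \<Longrightarrow> meets h (Q D) \<Longrightarrow> meets h (Q d)"
proof -
  assume a: "meets h (Q 0)" "meets h (Q D)"
  obtain k1 where k1: "\<And>j. j \<le> D \<Longrightarrow> cc (h @ gpow GT k1 @ gpow GT (int j)) = Q j"
    using base[OF a] by blast
  have "cc (h @ gpow GT (k1 + int d)) = Q d" using k1[of d] dD by (simp add: cc_shift')
  thus ?thesis by (auto simp: meets_def)
qed

lemma claimB:
  assumes mn: "\<bar>m\<bar> < \<bar>n\<bar>" and a: "meets h0 (Q 0)" "meets h0 (Q D)"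
  shows "\<exists>x. meets x (Q 0) \<and> meets x (Q d) \<and> \<not> meets x (Q D)"
proof -
  obtain k1 where k1: "\<And>j. j \<le> D \<Longrightarrow> cc (h0 @ gpow GT k1 @ gpow GT (int j)) = Q j"
    using base[OF a] by blast
  define x0 where "x0 = h0 @ gpow GT k1"
  have P0: "cc (x0 @ gpow GT (int j)) = Q j" if "j \<le> D" for j using k1[OF that] unfolding x0_def by simp
  have P: "\<And>j. j \<le> D \<Longrightarrow> act x0 (replicate j (0,True)) = Q j"
    using P0 by (simp add: cc_pt0 repT)
  obtain k where k: "stabT d k" "\<not> stabT (Suc d) k" using stabT_strict[OF mn] by blast
  define x where "x = x0 @ gpow GA k"
  have X: "cc (x @ gpow GT (int j)) = act x0 (mulA k (replicate j (0,True)))" for j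
    unfolding x_def by (simp add: cc_pt repT)
  have m1: "meets x (Q 0)"
  proof -
    have "cc (x @ gpow GT 0) = Q 0" using X[of 0] P[of 0] by simp
    thus ?thesis unfolding meets_def by blast
  qed
  have m2: "meets x (Q d)"
  proof -
    have "cc (x @ gpow GT (int d)) = Q d" using X[of d] P[of d] k(1) dD by (simp add: stabT_def)
    thus ?thesis by (auto simp: meets_def)
  qed
  have m3: "\<not> meets x (Q D)"
  proof
    assume "meets x (Q D)"
    then obtain j where j: "cc (x @ gpow GT j) = Q D" by (auto simp: meets_def)
    have x0': "cc (x @ gpow GT 0) = Q 0" using X[of 0] P[of 0] by simp
    have "j = int D" using meet_k[OF x0' j] hQ[of D] by simp
    hence "cc (x @ gpow GT (int D)) = Q D" using j by simp
    moreover have "cc x = Q 0" using x0' by simp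
    ultimately have "cc (x @ gpow GT (int (Suc d))) = Q (Suc d)" using pathQ[OF Qp, of x "Suc d"] dD by linarith
    hence "act x0 (mulA k (replicate (Suc d) (0,True))) = Q (Suc d)" unfolding X .
    moreover have "act x0 (replicate (Suc d) (0,True)) = Q (Suc d)" using P dD by (meson Suc_leI)
    ultimately have "act x0 (mulA k (replicate (Suc d) (0,True))) = act x0 (replicate (Suc d) (0,True))" by simp
    hence "mulA k (replicate (Suc d) (0,True)) = replicate (Suc d) (0,True)"
      by (rule act_inj[OF mulA_valid[OF rep_valid] rep_valid])
    thus False using k(2) by (simp add: stabT_def)
  qed
  show ?thesis using m1 m2 m3 by blast
qed

lemma claimC:
  assumes nd: "\<not> m dvd n" and a: "meets h0 (Q 0)" "meets h0 (Q D)"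
  shows "\<exists>x. meets x (Q d) \<and> meets x (Q D) \<and> \<not> meets x (Q 0)"
proof -
  obtain k1 where k1: "\<And>j. j \<le> D \<Longrightarrow> cc (h0 @ gpow GT k1 @ gpow GT (int j)) = Q j"
    using base[OF a] by blast
  define y0 where "y0 = h0 @ gpow GT (k1 + int D)"
  have Y: "cc (y0 @ gpow GT (- int (D - j))) = Q j" if "j \<le> D" for j
  proof -
    have "cc (y0 @ gpow GT (- int (D - j))) = cc (h0 @ gpow GT (k1 + int j))"
      unfolding y0_def using that by (simp add: cc_shift' of_nat_diff)
    thus ?thesis using k1[OF that] by (simp add: cc_shift')
  qed
  have P: "act y0 (replicate (D - j) (0,False)) = Q j" if "j \<le> D" for j
    using Y[OF that] by (simp add: cc_pt0 repF)
  define E where "E = D - d"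
  obtain k where k: "stabF E k" "\<not> stabF (Suc E) k" using stabF_strict[OF nd] by blast
  define x where "x = y0 @ gpow GA k"
  have X: "cc (x @ gpow GT (- int j)) = act y0 (mulA k (replicate j (0,False)))" for j
    unfolding x_def by (simp add: cc_pt repF)
  have xD: "cc x = Q D" using X[of 0] P[of D] by simp
  have "cc (x @ gpow GT 0) = Q D" using xD by simp
  hence m3: "meets x (Q D)" unfolding meets_def by blast
  have m2: "meets x (Q d)"
  proof -
    have "cc (x @ gpow GT (- int E)) = Q d" using X[of E] P[of d] k(1) dD E_def by (simp add: stabF_def)
    thus ?thesis by (auto simp: meets_def)
  qed
  have m1: "\<not> meets x (Q 0)"
  proof
    assume "meets x (Q 0)"
    then obtain j where j: "cc (x @ gpow GT j) = Q 0" by (auto simp: meets_def)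
    have x0': "cc (x @ gpow GT 0) = Q D" using xD by simp
    have jD: "j = - int D" using meet_k[OF j x0'] hQ[of D] by simp
    define y where "y = x @ gpow GT (- int D)"
    have "cc y = Q 0" using j jD y_def by simp
    moreover have "cc (y @ gpow GT (int D)) = Q D" unfolding y_def using xD by (simp add: cc_shift')
    ultimately have "cc (y @ gpow GT (int (d - 1))) = Q (d - 1)" using pathQ[OF Qp] dD by simp
    moreover have "cc (y @ gpow GT (int (d - 1))) = cc (x @ gpow GT (- int (Suc E)))"
    proof -
      have eqk: "- int D + int (d - 1) = - int (Suc E)" using d1 dD E_def by simp
      show ?thesis unfolding y_def append_assoc cc_shift' eqk ..
    qed
    ultimately have "act y0 (mulA k (replicate (Suc E) (0,False))) = act y0 (replicate (Suc E) (0,False))"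
      using X[of "Suc E"] P[of "d - 1"] d1 dD E_def by (simp add: Suc_diff_le)
    hence "mulA k (replicate (Suc E) (0,False)) = replicate (Suc E) (0,False)"
      by (rule act_inj[OF mulA_valid[OF rep_valid] rep_valid])
    thus False using k(2) by (simp add: stabF_def)
  qed
  show ?thesis using m1 m2 m3 by blast
qed

lemma claimD:
  assumes md: "m dvd n" and a: "meets h0 (Q 0)" "meets h0 (Q D)"
    and b: "meets h (Q d)" "meets h (Q D)"
  shows "meets h (Q 0)"
proof -
  obtain k1 where k1: "\<And>j. j \<le> D \<Longrightarrow> cc (h0 @ gpow GT k1 @ gpow GT (int j)) = Q j"
    using base[OF a] by blast
  define z0 where "z0 = h0 @ gpow GT k1 @ gpow GT (int d)"
  define E where "E = D - d"
  have z0d: "cc z0 = Q d" using k1[of d] dD unfolding z0_def by simp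
  have z0E: "cc (z0 @ gpow GT (int E)) = Q D"
    using k1[of D] dD unfolding z0_def E_def by (simp add: cc_shift3 cc_shift' of_nat_diff)
  have z0m: "cc (z0 @ gpow GT (- int d)) = Q 0"
    using k1[of 0] unfolding z0_def by (simp add: cc_shift3 cc_shift')
  obtain k2 k3 where kk: "cc (h @ gpow GT k2) = Q d" "cc (h @ gpow GT k3) = Q D"
    using b by (auto simp: meets_def)
  have "k3 - k2 = int E" using meet_k[OF kk] hQ[of D] hQ[of d] dD E_def by simp
  define z where "z = h @ gpow GT k2"
  have "k2 + int E = k3" using \<open>k3 - k2 = int E\<close> by simp
  hence zE: "cc (z @ gpow GT (int E)) = Q D" unfolding z_def using kk(2)
    by (simp add: cc_shift')
  obtain k where k: "bs_eq m n z (z0 @ gpow GA k)" using coset[of z0 z] z0d kk(1) z_def by metis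
  have "act z0 (mulA k (replicate E (0,True))) = cc (z @ gpow GT (int E))"
    using cc_bs[OF k] by (simp add: cc_pt repT)
  also have "\<dots> = act z0 (replicate E (0,True))" using zE z0E by (simp add: cc_pt0 repT)
  finally have "mulA k (replicate E (0,True)) = replicate E (0,True)"
    by (rule act_inj[OF mulA_valid[OF rep_valid] rep_valid])
  hence "stabT E k" by (simp add: stabT_def)
  hence "n dvd k" using stabT_dvd dD E_def by simp
  hence "m dvd k" using md dvd_trans by blast
  hence "stabF d k" using md stabF_dvd by blast
  have "cc (z @ gpow GT (- int d)) = act z0 (mulA k (replicate d (0,False)))"
    using cc_bs[OF k] by (simp add: cc_pt repF)
  also have "\<dots> = act z0 (replicate d (0,False))" using \<open>stabF d k\<close> by (simp add: stabF_def)
  also have "\<dots> = Q 0" using z0m by (simp add: cc_pt0 repF)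
  finally have "cc (h @ gpow GT (k2 + - int d)) = Q 0" unfolding z_def by (simp add: cc_shift')
  thus ?thesis by (auto simp: meets_def)
qed

end
end


lemma tline_mem: "line m n GT h \<in> tlines m n" by (auto simp: tlines_def)

theorem corollary3p7:
  fixes m n :: int and u1 u2 u3 :: "word set set"
  assumes "m \<noteq> 0" and "n \<noteq> 0" and "\<bar>m\<bar> < \<bar>n\<bar>"
    and "u1 \<in> alines m n" and "u2 \<in> alines m n" and "u3 \<in> alines m n"
    and "Tless m n u1 u2" and "Tless m n u2 u3"
    and "Llink m n (VA u1) \<inter> Llink m n (VA u3) \<noteq> {}"
  shows "Llink m n (VA u1) \<inter> Llink m n (VA u3) \<subset> Llink m n (VA u1) \<inter> Llink m n (VA u2)
    \<and> Llink m n (VA u1) \<inter> Llink m n (VA u3) \<subseteq> Llink m n (VA u2) \<inter> Llink m n (VA u3)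
    \<and> (\<not> m dvd n \<longrightarrow> Llink m n (VA u1) \<inter> Llink m n (VA u3) \<subset> Llink m n (VA u2) \<inter> Llink m n (VA u3))
    \<and> (m dvd n \<longrightarrow> Llink m n (VA u1) \<inter> Llink m n (VA u3) = Llink m n (VA u2) \<inter> Llink m n (VA u3))"
proof -
  interpret BS m n using assms(1,2) by unfold_locales
  obtain g1 where g1: "u1 = line m n GA g1" using assms(4) by (auto simp: alines_def)
  obtain g2 where g2: "u2 = line m n GA g2" using assms(5) by (auto simp: alines_def)
  obtain g3 where g3: "u3 = line m n GA g3" using assms(6) by (auto simp: alines_def)
  obtain d P where P: "d \<ge> 1" "stpath P d" "P 0 = cd u1" "P d = cd u2" using Tless_path[OF assms(7)] by blast
  obtain e P' where P': "e \<ge> 1" "stpath P' e" "P' 0 = cd u2" "P' e = cd u3" using Tless_path[OF assms(8)] by blast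
  define Q where "Q j = (if j \<le> d then P j else P' (j - d))" for j
  define D where "D = d + e"
  have Qp: "stpath Q D" unfolding Q_def D_def using stpath_concat P(2) P'(2) P(4) P'(3) by simp
  have dD: "d < D" using P'(1) D_def by simp
  have Q0: "Q 0 = cc g1" using P(3) g1 cd_line by (simp add: Q_def)
  have Qd: "Q d = cc g2" using P(4) g2 cd_line by (simp add: Q_def)
  have QD: "Q D = cc g3" using P'(4) P'(1) g3 cd_line by (simp add: Q_def D_def)
  have mt1: "line m n GT h \<inter> u1 \<noteq> {} \<longleftrightarrow> meets h (Q 0)" for h using meetT g1 Q0 by (simp add: meets_def)
  have mt2: "line m n GT h \<inter> u2 \<noteq> {} \<longleftrightarrow> meets h (Q d)" for h using meetT g2 Qd by (simp add: meets_def)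
  have mt3: "line m n GT h \<inter> u3 \<noteq> {} \<longleftrightarrow> meets h (Q D)" for h using meetT g3 QD by (simp add: meets_def)
  define M1 where "M1 = {l \<in> tlines m n. l \<inter> u1 \<noteq> {}}"
  define M2 where "M2 = {l \<in> tlines m n. l \<inter> u2 \<noteq> {}}"
  define M3 where "M3 = {l \<in> tlines m n. l \<inter> u3 \<noteq> {}}"
  have L1: "Llink m n (VA u1) = VT ` M1" using Llink_char[OF assms(4)] M1_def by simp
  have L2: "Llink m n (VA u2) = VT ` M2" using Llink_char[OF assms(5)] M2_def by simp
  have L3: "Llink m n (VA u3) = VT ` M3" using Llink_char[OF assms(6)] M3_def by simp
  have inj: "inj VT" by (auto intro: injI)
  have I: "VT ` A \<inter> VT ` B = VT ` (A \<inter> B)" for A B using inj by (simp add: image_Int)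
  have tl: "l \<in> tlines m n \<Longrightarrow> \<exists>h. l = line m n GT h" for l by (auto simp: tlines_def)
  have inM: "line m n GT h \<in> M1 \<longleftrightarrow> meets h (Q 0)" "line m n GT h \<in> M2 \<longleftrightarrow> meets h (Q d)"
    "line m n GT h \<in> M3 \<longleftrightarrow> meets h (Q D)" for h
    using mt1 mt2 mt3 tline_mem by (auto simp: M1_def M2_def M3_def)
  obtain h0 where h0: "meets h0 (Q 0)" "meets h0 (Q D)"
  proof -
    obtain y where "y \<in> VT ` M1 \<inter> VT ` M3" using assms(9) L1 L3 by blast
    then obtain l where "l \<in> M1" "l \<in> M3" by blast
    moreover then obtain h where "l = line m n GT h" using tl M1_def by blast
    ultimately show ?thesis using that inM by blast
  qed
  have A: "M1 \<inter> M3 \<subseteq> M2"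
  proof
    fix l assume l: "l \<in> M1 \<inter> M3"
    then obtain h where h: "l = line m n GT h" using tl M1_def by blast
    thus "l \<in> M2" using l inM claimA[OF Qp P(1) dD] by blast
  qed
  have s1: "VT ` (M1 \<inter> M3) \<subset> VT ` (M1 \<inter> M2)"
  proof -
    obtain x where x: "meets x (Q 0)" "meets x (Q d)" "\<not> meets x (Q D)"
      using claimB[OF Qp P(1) dD assms(3) h0] by blast
    have "VT (line m n GT x) \<in> VT ` (M1 \<inter> M2)" using x inM by blast
    moreover have "VT (line m n GT x) \<notin> VT ` (M1 \<inter> M3)" using x inM inj by (auto dest: injD)
    ultimately show ?thesis using A by blast
  qed
  have s2: "VT ` (M1 \<inter> M3) \<subseteq> VT ` (M2 \<inter> M3)" using A by blast
  have s3: "\<not> m dvd n \<longrightarrow> VT ` (M1 \<inter> M3) \<subset> VT ` (M2 \<inter> M3)"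
  proof
    assume nd: "\<not> m dvd n"
    obtain x where x: "meets x (Q d)" "meets x (Q D)" "\<not> meets x (Q 0)"
      using claimC[OF Qp P(1) dD nd h0] by blast
    have "VT (line m n GT x) \<in> VT ` (M2 \<inter> M3)" using x inM by blast
    moreover have "VT (line m n GT x) \<notin> VT ` (M1 \<inter> M3)" using x inM inj by (auto dest: injD)
    ultimately show "VT ` (M1 \<inter> M3) \<subset> VT ` (M2 \<inter> M3)" using s2 by blast
  qed
  have s4: "m dvd n \<longrightarrow> VT ` (M1 \<inter> M3) = VT ` (M2 \<inter> M3)"
  proof
    assume md: "m dvd n"
    have "M2 \<inter> M3 \<subseteq> M1"
    proof
      fix l assume l: "l \<in> M2 \<inter> M3"
      then obtain h where h: "l = line m n GT h" using tl M2_def by blast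
      thus "l \<in> M1" using l inM claimD[OF Qp P(1) dD md h0] by blast
    qed
    thus "VT ` (M1 \<inter> M3) = VT ` (M2 \<inter> M3)" using A by blast
  qed
  show ?thesis unfolding L1 L2 L3 I using s1 s2 s3 s4 by blast
qed

end
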